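(* Consider pairs $C\in\mathbb{F}_p^n$, $C\neq 0$, and $(d_1,\dots,d_n)\in\mathbb{F}_p^n$ satisfying $\sum_jM_jC_j=0$, $\Omega^M_jC=d_jC$ for $j=1,\dots,n-1$, and $d_n=0$. For such a pair, $(d_1,\dots,d_n)$ is uniquely determined by $C$; for $c\in\mathbb{F}_p^\times$ the pair $cC,(d_1,\dots,d_n)$ is again such a pair; and the number of equivalence classes of such pairs modulo $C\mapsto cC$ equals $n-1$ minus the number of indices $i$ with $1\le i\le n-2$ and $\sum_{j=i+1}^nM_j=0$ in $\mathbb{F}_p$.
   Context: $p$ is an odd prime, $n\ge2$, and $M_1,\dots,M_n$ are integers with $1\le M_i\le p-1$, viewed in $\mathbb{F}_p$. For $j\ne l$, $\Omega^M_{jl}$ is the $n\times n$ matrix over $\mathbb{F}_p$ with only nonzero entries $(\Omega^M_{jl})_{jj}=M_l$, $(\Omega^M_{jl})_{jl}=-M_l$, $(\Omega^M_{jl})_{lj}=-M_j$, $(\Omega^M_{jl})_{ll}=M_j$; $\Omega^M_j=\sum_{l=j+1}^n\Omega^M_{jl}$; $C$ is a column vector. *)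

theory Defs
  imports Main "Berlekamp_Zassenhaus.Finite_Field"
begin

text \<open>Vectors in F^n are functions nat => F, indices 1..n, zero outside.
  Matrices are functions nat => nat => F, indices 1..n.\<close>

definition vecs :: "nat \<Rightarrow> (nat \<Rightarrow> 'f::zero) set" where
  "vecs n = {v. \<forall>i. i \<notin> {1..n} \<longrightarrow> v i = 0}"

definition mat_vec :: "nat \<Rightarrow> (nat \<Rightarrow> nat \<Rightarrow> 'f::comm_ring_1) \<Rightarrow> (nat \<Rightarrow> 'f) \<Rightarrow> (nat \<Rightarrow> 'f)" where
  "mat_vec n A v = (\<lambda>a. if a \<in> {1..n} then (\<Sum>b=1..n. A a b * v b) else 0)"

definition OmegaM_jl :: "(nat \<Rightarrow> nat) \<Rightarrow> nat \<Rightarrow> nat \<Rightarrow> nat \<Rightarrow> nat \<Rightarrow> 'f::comm_ring_1" where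
  "OmegaM_jl M j l = (\<lambda>a b.
     if a = j \<and> b = j then of_nat (M l)
     else if a = j \<and> b = l then - of_nat (M l)
     else if a = l \<and> b = j then - of_nat (M j)
     else if a = l \<and> b = l then of_nat (M j)
     else 0)"

definition OmegaM_j :: "nat \<Rightarrow> (nat \<Rightarrow> nat) \<Rightarrow> nat \<Rightarrow> nat \<Rightarrow> nat \<Rightarrow> 'f::comm_ring_1" where
  "OmegaM_j n M j = (\<lambda>a b. \<Sum>l\<in>{j+1..n}. OmegaM_jl M j l a b)"

definition admissible_pairs :: "nat \<Rightarrow> (nat \<Rightarrow> nat) \<Rightarrow> ((nat \<Rightarrow> 'f::field) \<times> (nat \<Rightarrow> 'f)) set" where
  "admissible_pairs n M = {(C, d). C \<in> vecs n \<and> d \<in> vecs n \<and> C \<noteq> (\<lambda>_. 0)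
      \<and> (\<Sum>j=1..n. of_nat (M j) * C j) = 0
      \<and> (\<forall>j\<in>{1..n-1}. mat_vec n (OmegaM_j n M j) C = (\<lambda>a. d j * C a))
      \<and> d n = 0}"

definition scaling_rel :: "nat \<Rightarrow> (nat \<Rightarrow> nat) \<Rightarrow> (((nat \<Rightarrow> 'f::field) \<times> (nat \<Rightarrow> 'f)) \<times> ((nat \<Rightarrow> 'f) \<times> (nat \<Rightarrow> 'f))) set" where
  "scaling_rel n M = {((C, d), (C', d')). (C, d) \<in> admissible_pairs n M \<and> (C', d') \<in> admissible_pairs n M
      \<and> d' = d \<and> (\<exists>c. c \<noteq> 0 \<and> C' = (\<lambda>a. c * C a))}"

end

theory Submission
  imports Defs
begin

lemma row_jl:
  fixes C :: "nat \<Rightarrow> 'f::field"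
  assumes "j \<in> {1..n}" "l \<in> {1..n}" "j \<noteq> l"
  shows "(\<Sum>b=1..n. OmegaM_jl M j l a b * C b) =
     (if a=j then of_nat (M l) else if a=l then - of_nat (M j) else 0) * C j +
     (if a=j then - of_nat (M l) else if a=l then of_nat (M j) else 0) * C l" (is "_ = ?R")
proof -
  have "OmegaM_jl M j l a b * C b = (if b = j then (if a=j then of_nat (M l) else if a=l then - of_nat (M j) else 0) * C j else 0)
     + (if b = l then (if a=j then - of_nat (M l) else if a=l then of_nat (M j) else 0) * C l else 0)" for b
    using assms(3) by (auto simp: OmegaM_jl_def)
  then have "(\<Sum>b=1..n. OmegaM_jl M j l a b * C b) = (\<Sum>b=1..n. (if b = j then (if a=j then of_nat (M l) else if a=l then - of_nat (M j) else 0) * C j else 0)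
     + (if b = l then (if a=j then - of_nat (M l) else if a=l then of_nat (M j) else 0) * C l else 0))" by simp
  also have "\<dots> = ?R" unfolding sum.distrib using assms(1,2) by (simp add: sum.delta)
  finally show ?thesis .
qed

lemma Om_apply:
  fixes C :: "nat \<Rightarrow> 'f::field"
  assumes j: "j \<in> {1..n}" and a: "a \<in> {1..n}"
  shows "mat_vec n (OmegaM_j n M j) C a =
    (if a = j then (\<Sum>l\<in>{j+1..n}. of_nat (M l) * (C j - C l))
     else if j < a then of_nat (M j) * (C a - C j) else 0)"
proof -
  have "mat_vec n (OmegaM_j n M j) C a = (\<Sum>b=1..n. \<Sum>l\<in>{j+1..n}. OmegaM_jl M j l a b * C b)"
    using a by (simp add: mat_vec_def OmegaM_j_def sum_distrib_right)
  also have "\<dots> = (\<Sum>l\<in>{j+1..n}. \<Sum>b=1..n. OmegaM_jl M j l a b * C b)"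
    by (rule sum.swap)
  also have "\<dots> = (\<Sum>l\<in>{j+1..n}. 
     (if a=j then of_nat (M l) else if a=l then - of_nat (M j) else 0) * C j +
     (if a=j then - of_nat (M l) else if a=l then of_nat (M j) else 0) * C l)"
    by (rule sum.cong[OF refl], rule row_jl) (use j in auto)
  also have "\<dots> = (if a = j then (\<Sum>l\<in>{j+1..n}. of_nat (M l) * (C j - C l))
     else if j < a then of_nat (M j) * (C a - C j) else 0)"
  proof (cases "a = j")
    case True then show ?thesis by (simp add: algebra_simps)
  next
    case False
    then have "(\<Sum>l\<in>{j+1..n}. 
     (if a=j then of_nat (M l) else if a=l then - of_nat (M j) else 0) * C j +
     (if a=j then - of_nat (M l) else if a=l then of_nat (M j) else 0) * C l)
      = (\<Sum>l\<in>{j+1..n}. if a = l then of_nat (M j) * (C a - C j) else 0)"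
      by (intro sum.cong) (auto simp: algebra_simps)
    also have "\<dots> = (if j < a then of_nat (M j) * (C a - C j) else 0)"
      using a False by (auto simp: sum.delta)
    finally show ?thesis using False by simp
  qed
  finally show ?thesis .
qed


lemma eig_iff:
  fixes C :: "nat \<Rightarrow> 'f::field"
  assumes C: "C \<in> vecs n" and j: "j \<in> {1..n}"
  shows "(mat_vec n (OmegaM_j n M j) C = (\<lambda>a. e * C a)) \<longleftrightarrow>
    (\<forall>a\<in>{1..n}. (if a = j then (\<Sum>l\<in>{j+1..n}. of_nat (M l) * (C j - C l))
     else if j < a then of_nat (M j) * (C a - C j) else 0) = e * C a)"
proof -
  have that: "mat_vec n (OmegaM_j n M j) C a = e * C a" if "a \<notin> {1..n}" for a
  proof -
    have "C a = 0" using that C by (simp add: vecs_def)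
    moreover have "mat_vec n (OmegaM_j n M j) C a = 0" unfolding mat_vec_def using that by (simp only: if_False)
    ultimately show ?thesis by simp
  qed
  note O = Om_apply[OF j, of _ M C]
  show ?thesis
  proof
    assume H: "mat_vec n (OmegaM_j n M j) C = (\<lambda>a. e * C a)"
    show "\<forall>a\<in>{1..n}. (if a = j then (\<Sum>l\<in>{j+1..n}. of_nat (M l) * (C j - C l))
     else if j < a then of_nat (M j) * (C a - C j) else 0) = e * C a"
    proof
      fix a assume a: "a \<in> {1..n}"
      show "(if a = j then (\<Sum>l\<in>{j+1..n}. of_nat (M l) * (C j - C l))
     else if j < a then of_nat (M j) * (C a - C j) else 0) = e * C a"
        using O[OF a] H by (metis)
    qed
  next
    assume H: "\<forall>a\<in>{1..n}. (if a = j then (\<Sum>l\<in>{j+1..n}. of_nat (M l) * (C j - C l))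
     else if j < a then of_nat (M j) * (C a - C j) else 0) = e * C a"
    show "mat_vec n (OmegaM_j n M j) C = (\<lambda>a. e * C a)"
    proof
      fix a show "mat_vec n (OmegaM_j n M j) C a = e * C a"
      proof (cases "a \<in> {1..n}")
        case True then show ?thesis using O[OF True] H by metis
      qed (use that in auto)
    qed
  qed
qed

lemma uniq:
  assumes "(C, d) \<in> (admissible_pairs n M :: ((nat \<Rightarrow> 'f::field) \<times> _) set)"
    and "(C, d') \<in> admissible_pairs n M"
  shows "d = d'"
proof
  fix i
  from assms obtain a where a: "C a \<noteq> 0" by (auto simp: admissible_pairs_def fun_eq_iff)
  show "d i = d' i"
  proof (cases "i \<in> {1..n-1}")
    case True
    then have "d i * C a = d' i * C a" using assms
      unfolding admissible_pairs_def by (auto simp: fun_eq_iff)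
    then show ?thesis using a by simp
  next
    case False
    then have "i \<notin> {1..n} \<or> i = n" by auto
    then show ?thesis using assms by (auto simp: admissible_pairs_def vecs_def)
  qed
qed

lemma mat_vec_scale: "mat_vec n A (\<lambda>a. c * C a) = (\<lambda>a. c * mat_vec n A C a)"
  by (auto simp: mat_vec_def fun_eq_iff sum_distrib_left algebra_simps)

lemma scale:
  assumes "(C, d) \<in> (admissible_pairs n M :: ((nat \<Rightarrow> 'f::field) \<times> _) set)" and c: "c \<noteq> 0"
  shows "((\<lambda>a. c * C a), d) \<in> admissible_pairs n M"
proof -
  have "(\<Sum>j=1..n. of_nat (M j) * (c * C j)) = c * (\<Sum>j=1..n. of_nat (M j) * C j)"
    by (simp add: sum_distrib_left algebra_simps)
  then show ?thesis using assms
    by (auto simp: admissible_pairs_def vecs_def mat_vec_scale fun_eq_iff)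
qed

definition first_nz :: "(nat \<Rightarrow> 'f::zero) \<Rightarrow> nat" where
  "first_nz C = (LEAST k. C k \<noteq> 0)"

lemma first_nz_scale: "(c::'f::field) \<noteq> 0 \<Longrightarrow> first_nz (\<lambda>a. c * C a) = first_nz C"
  by (simp add: first_nz_def)

lemma first_nz:
  assumes "C \<noteq> (\<lambda>_. 0)"
  shows "C (first_nz C) \<noteq> 0" "\<And>l. l < first_nz C \<Longrightarrow> C l = 0"
proof -
  from assms obtain a where "C a \<noteq> 0" by auto
  then show "C (first_nz C) \<noteq> 0" unfolding first_nz_def by (rule LeastI)
  show "\<And>l. l < first_nz C \<Longrightarrow> C l = 0" unfolding first_nz_def using not_less_Least by blast
qed

lemma tail_sum:
  fixes C :: "nat \<Rightarrow> 'f::field"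
  assumes "k \<le> n" "j < k" "\<forall>l. j < l \<and> l < k \<longrightarrow> C l = 0" "\<forall>l. k < l \<and> l \<le> n \<longrightarrow> C l = b"
  shows "(\<Sum>l=j+1..n. of_nat (M l) * C l) = of_nat (M k) * C k + (\<Sum>l=k+1..n. (of_nat (M l)::'f)) * b"
proof -
  have "(\<Sum>l=j+1..n. of_nat (M l) * C l) = (\<Sum>l=k..n. of_nat (M l) * C l)"
    by (rule sum.mono_neutral_right) (use assms in auto)
  also have "{k..n} = insert k {k+1..n}" using assms by auto
  also have "(\<Sum>l\<in>insert k {k+1..n}. of_nat (M l) * C l) = of_nat (M k) * C k + (\<Sum>l=k+1..n. of_nat (M l) * C l)"
    by simp
  also have "(\<Sum>l=k+1..n. of_nat (M l) * C l) = (\<Sum>l=k+1..n. of_nat (M l) * b)"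
    by (rule sum.cong) (use assms in auto)
  finally show ?thesis by (simp add: sum_distrib_right)
qed


lemma necessary:
  assumes Mnz: "\<forall>i\<in>{1..n}. (of_nat (M i)::'f::field) \<noteq> 0"
    and A: "(C, d) \<in> (admissible_pairs n M :: ((nat \<Rightarrow> 'f) \<times> _) set)"
  defines "k \<equiv> first_nz C"
  shows "1 \<le> k \<and> k \<le> n - 1 \<and> (\<Sum>l=k+1..n. (of_nat (M l)::'f)) \<noteq> 0
    \<and> (\<forall>l. k < l \<and> l \<le> n \<longrightarrow> C l = - (of_nat (M k) / (\<Sum>l=k+1..n. (of_nat (M l)::'f))) * C k)"
proof -
  from A have Cv: "C \<in> vecs n" and Cnz: "C \<noteq> (\<lambda>_. 0)" and S: "(\<Sum>j=1..n. of_nat (M j) * C j) = 0"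
    and E: "\<forall>j\<in>{1..n-1}. mat_vec n (OmegaM_j n M j) C = (\<lambda>a. d j * C a)"
    by (auto simp: admissible_pairs_def)
  have Ck: "C k \<noteq> 0" and Cl: "\<And>l. l < k \<Longrightarrow> C l = 0" using first_nz[OF Cnz] k_def by auto
  have kn: "k \<in> {1..n}" using Ck Cv by (auto simp: vecs_def)
  have eq: "C l = C (k+1)" if "k + 1 < l" "l \<le> n" for l
  proof -
    have j: "k+1 \<in> {1..n-1}" "k+1 \<in> {1..n}" using that by auto
    note H = E[rule_format, OF j(1), unfolded eig_iff[OF Cv j(2)]]
    have "d (k+1) * C k = 0" using H[rule_format, of k] kn by simp
    then have "d (k+1) = 0" using Ck by simp
    moreover have "of_nat (M (k+1)) * (C l - C (k+1)) = d (k+1) * C l" using H[rule_format, of l] that by simp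
    moreover have "(of_nat (M (k+1))::'f) \<noteq> 0" using Mnz j by auto
    ultimately show ?thesis by simp
  qed
  let ?T = "(\<Sum>l=k+1..n. (of_nat (M l)::'f))"
  have "(\<Sum>l=0+1..n. of_nat (M l) * C l) = of_nat (M k) * C k + ?T * C (k+1)"
  proof (rule tail_sum)
    show "k \<le> n" "0 < k" using kn by auto
    show "\<forall>l. 0 < l \<and> l < k \<longrightarrow> C l = 0" using Cl by blast
    show "\<forall>l. k < l \<and> l \<le> n \<longrightarrow> C l = C (k+1)"
    proof (intro allI impI)
      fix l assume "k < l \<and> l \<le> n"
      then have "l = k+1 \<or> k+1 < l" by auto
      then show "C l = C (k+1)" using eq \<open>k < l \<and> l \<le> n\<close> by blast
    qed
  qed
  with S have S2: "of_nat (M k) * C k + ?T * C (k+1) = 0" by simp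
  have Tnz: "?T \<noteq> 0"
  proof
    assume "?T = 0"
    then have "of_nat (M k) * C k = 0" using S2 by simp
    then show False using Ck Mnz kn by auto
  qed
  then have "k \<noteq> n" by auto
  then have "k \<le> n - 1" using kn by auto
  moreover
  have "?T * C (k+1) = - (of_nat (M k) * C k)" using S2 by (simp add: eq_neg_iff_add_eq_0 add.commute)
  then have Ck1: "C (k+1) = - (of_nat (M k) / ?T) * C k" using Tnz
    by (simp add: divide_simps) (simp add: algebra_simps)
  have "\<forall>l. k < l \<and> l \<le> n \<longrightarrow> C l = - (of_nat (M k) / ?T) * C k"
  proof (intro allI impI)
    fix l assume l: "k < l \<and> l \<le> n"
    show "C l = - (of_nat (M k) / ?T) * C k"
    proof (cases "l = k+1")
      case True then show ?thesis using Ck1 by simp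
    next
      case False then show ?thesis using Ck1 eq[of l] l by simp
    qed
  qed
  ultimately show ?thesis using kn Tnz by simp
qed


definition Tsum :: "nat \<Rightarrow> (nat \<Rightarrow> nat) \<Rightarrow> nat \<Rightarrow> 'f::field" where
  "Tsum n M k = (\<Sum>l=k+1..n. of_nat (M l))"

definition beta0 :: "nat \<Rightarrow> (nat \<Rightarrow> nat) \<Rightarrow> nat \<Rightarrow> 'f::field" where
  "beta0 n M k = - (of_nat (M k) / Tsum n M k)"

definition C0 :: "nat \<Rightarrow> (nat \<Rightarrow> nat) \<Rightarrow> nat \<Rightarrow> nat \<Rightarrow> 'f::field" where
  "C0 n M k = (\<lambda>l. if l = k then 1 else if k < l \<and> l \<le> n then beta0 n M k else 0)"

definition D0 :: "nat \<Rightarrow> (nat \<Rightarrow> nat) \<Rightarrow> nat \<Rightarrow> nat \<Rightarrow> 'f::field" where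
  "D0 n M k = (\<lambda>l. if 1 \<le> l \<and> l < k then of_nat (M l)
     else if l = k then of_nat (M k) * (beta0 n M k - 1) / beta0 n M k else 0)"

lemma sufficient:
  assumes Mnz: "\<forall>i\<in>{1..n}. (of_nat (M i)::'f::field) \<noteq> 0"
    and k: "1 \<le> k" "k \<le> n - 1" and Tnz: "(Tsum n M k :: 'f) \<noteq> 0"
  shows "(C0 n M k, D0 n M k) \<in> (admissible_pairs n M :: ((nat \<Rightarrow> 'f) \<times> _) set)"
    and "first_nz (C0 n M k :: nat \<Rightarrow> 'f) = k"
proof -
  let ?C = "C0 n M k :: nat \<Rightarrow> 'f" and ?D = "D0 n M k :: nat \<Rightarrow> 'f"
  let ?b = "beta0 n M k :: 'f" and ?T = "Tsum n M k :: 'f" and ?m = "\<lambda>i. (of_nat (M i) :: 'f)"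
  have kn: "k < n" using k by auto
  have mk: "?m k \<noteq> 0" using Mnz k by auto
  have bnz: "?b \<noteq> 0" using mk Tnz by (simp add: beta0_def)
  have Cv: "?C \<in> vecs n" using k by (auto simp: vecs_def C0_def)
  have Dv: "?D \<in> vecs n" using k by (auto simp: vecs_def D0_def)
  have Cnz: "?C \<noteq> (\<lambda>_. 0)" by (auto simp: C0_def fun_eq_iff)
  have key: "?m k * 1 + ?T * ?b = 0" using Tnz by (simp add: beta0_def)
  have TS: "(\<Sum>l=j+1..n. ?m l * ?C l) = 0" if "j < k" for j
  proof -
    have "(\<Sum>l=j+1..n. ?m l * ?C l) = ?m k * ?C k + (\<Sum>l=k+1..n. ?m l) * ?b"
      by (rule tail_sum) (use that kn in \<open>auto simp: C0_def\<close>)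
    then show ?thesis using key by (simp add: C0_def Tsum_def)
  qed
  have S: "(\<Sum>j=1..n. ?m j * ?C j) = 0" using TS[of 0] k by simp
  have E: "mat_vec n (OmegaM_j n M j) ?C = (\<lambda>a. ?D j * ?C a)" if j: "j \<in> {1..n-1}" for j
  proof -
    have j2: "j \<in> {1..n}" using j by auto
    show ?thesis unfolding eig_iff[OF Cv j2]
    proof
      fix a assume a: "a \<in> {1..n}"
      consider "j < k" | "j = k" | "k < j" by linarith
      then show "(if a = j then \<Sum>l = j + 1..n. ?m l * (?C j - ?C l)
             else if j < a then ?m j * (?C a - ?C j) else 0) = ?D j * ?C a"
      proof cases
        case 1
        have Cj: "?C j = 0" using 1 by (simp add: C0_def)
        have Dj: "?D j = ?m j" using 1 j by (simp add: D0_def)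
        show ?thesis
        proof (cases "a = j")
          case True
          have "(\<Sum>l = j + 1..n. ?m l * (?C j - ?C l)) = - (\<Sum>l = j + 1..n. ?m l * ?C l)"
            by (simp add: Cj sum_negf[symmetric])
          then show ?thesis using True TS[OF 1] Cj by simp
        next
          case False then show ?thesis using 1 Cj Dj by (auto simp: C0_def)
        qed
      next
        case 2
        show ?thesis
        proof (cases "a = j")
          case True
          have "(\<Sum>l = j + 1..n. ?m l * (?C j - ?C l)) = (\<Sum>l = k + 1..n. ?m l * (1 - ?b))"
            using 2 by (intro sum.cong) (auto simp: C0_def)
          also have "\<dots> = ?T * (1 - ?b)" by (simp add: Tsum_def sum_distrib_right)
          also have "?T = - ?m k / ?b" using bnz Tnz by (simp add: beta0_def field_simps)
          also have "- ?m k / ?b * (1 - ?b) = ?D j * ?C a" using True 2 bnz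
            by (simp add: D0_def C0_def field_simps)
          finally show ?thesis using True by simp
        next
          case False then show ?thesis using 2 a bnz by (auto simp: C0_def D0_def field_simps)
        qed
      next
        case 3
        have Dj: "?D j = 0" using 3 by (simp add: D0_def)
        show ?thesis
        proof (cases "a = j")
          case True
          have "(\<Sum>l = j + 1..n. ?m l * (?C j - ?C l)) = (\<Sum>l = j + 1..n. 0)"
            using 3 j by (intro sum.cong) (auto simp: C0_def)
          then show ?thesis using True Dj by simp
        next
          case False then show ?thesis using 3 a j Dj by (auto simp: C0_def)
        qed
      qed
    qed
  qed
  have "?D n = 0" using kn by (simp add: D0_def)
  then show "(?C, ?D) \<in> admissible_pairs n M"
    using Cv Dv Cnz S E by (simp add: admissible_pairs_def)
  show "first_nz ?C = k"
    unfolding first_nz_def by (rule Least_equality) (auto simp: C0_def split: if_splits)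
qed


lemma equiv_scaling: "equiv (admissible_pairs n M :: ((nat \<Rightarrow> 'f::field) \<times> _) set) (scaling_rel n M)"
proof (rule equivI)
  show "scaling_rel n M \<subseteq> (admissible_pairs n M :: ((nat \<Rightarrow> 'f::field) \<times> _) set) \<times> admissible_pairs n M"
    unfolding scaling_rel_def by auto
  show "refl_on (admissible_pairs n M :: ((nat \<Rightarrow> 'f::field) \<times> _) set) (scaling_rel n M)"
    unfolding refl_on_def scaling_rel_def by (auto intro: exI[of _ 1])
  show "sym (scaling_rel n M :: (((nat \<Rightarrow> 'f::field) \<times> _) \<times> _) set)"
  proof (rule symI)
    fix x y assume "(x, y) \<in> (scaling_rel n M :: (((nat \<Rightarrow> 'f::field) \<times> _) \<times> _) set)"
    then obtain C d C' c where xy: "x = (C, d)" "y = (C', d)" "x \<in> admissible_pairs n M" "y \<in> admissible_pairs n M"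
      "c \<noteq> 0" "C' = (\<lambda>a. c * C a)" unfolding scaling_rel_def by auto
    have "C = (\<lambda>a. inverse c * C' a)" using xy by (auto simp: fun_eq_iff)
    then show "(y, x) \<in> scaling_rel n M" using xy unfolding scaling_rel_def
      by (auto intro!: exI[of _ "inverse c"])
  qed
  show "trans (scaling_rel n M :: (((nat \<Rightarrow> 'f::field) \<times> _) \<times> _) set)"
  proof (rule transI)
    fix x y z assume "(x, y) \<in> (scaling_rel n M :: (((nat \<Rightarrow> 'f::field) \<times> _) \<times> _) set)"
      "(y, z) \<in> scaling_rel n M"
    then obtain C d C' c C'' c' where xy: "x = (C, d)" "y = (C', d)" "z = (C'', d)" "x \<in> admissible_pairs n M"
      "z \<in> admissible_pairs n M"
      "c \<noteq> 0" "C' = (\<lambda>a. c * C a)" "c' \<noteq> 0" "C'' = (\<lambda>a. c' * C' a)" unfolding scaling_rel_def by auto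
    have "C'' = (\<lambda>a. (c' * c) * C a)" using xy by (auto simp: fun_eq_iff)
    then show "(x, z) \<in> scaling_rel n M" using xy unfolding scaling_rel_def
      by (auto intro!: exI[of _ "c' * c"])
  qed
qed

lemma count:
  assumes Mnz: "\<forall>i\<in>{1..n}. (of_nat (M i)::'f::field) \<noteq> 0"
  shows "card ((admissible_pairs n M :: ((nat \<Rightarrow> 'f) \<times> _) set) // scaling_rel n M)
     = card {k. 1 \<le> k \<and> k \<le> n - 1 \<and> (Tsum n M k :: 'f) \<noteq> 0}"
proof -
  let ?A = "admissible_pairs n M :: ((nat \<Rightarrow> 'f) \<times> _) set" and ?R = "scaling_rel n M :: (((nat \<Rightarrow> 'f) \<times> _) \<times> _) set"
  let ?K = "{k. 1 \<le> k \<and> k \<le> n - 1 \<and> (Tsum n M k :: 'f) \<noteq> 0}"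
  define g where "g k = ?R `` {(C0 n M k :: nat \<Rightarrow> 'f, D0 n M k :: nat \<Rightarrow> 'f)}" for k
  note eqv = equiv_scaling[where 'f='f, of n M]
  have inA: "(C0 n M k :: nat \<Rightarrow> 'f, D0 n M k :: nat \<Rightarrow> 'f) \<in> ?A" and fz: "first_nz (C0 n M k :: nat \<Rightarrow> 'f) = k"
    if "k \<in> ?K" for k using sufficient[OF Mnz, of k] that by auto
  have "bij_betw g ?K (?A // ?R)"
  proof (rule bij_betw_imageI)
    show "inj_on g ?K"
    proof (rule inj_onI)
      fix k1 k2 assume k: "k1 \<in> ?K" "k2 \<in> ?K" "g k1 = g k2"
      then have "((C0 n M k1 :: nat \<Rightarrow> 'f, D0 n M k1 :: nat \<Rightarrow> 'f), (C0 n M k2, D0 n M k2)) \<in> ?R"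
        unfolding g_def using eq_equiv_class_iff[OF eqv inA[OF k(1)] inA[OF k(2)]] by simp
      then obtain c where "c \<noteq> 0" "(C0 n M k2 :: nat \<Rightarrow> 'f) = (\<lambda>a. c * C0 n M k1 a)"
        unfolding scaling_rel_def by auto
      then have "first_nz (C0 n M k2 :: nat \<Rightarrow> 'f) = first_nz (C0 n M k1 :: nat \<Rightarrow> 'f)"
        by (simp add: first_nz_scale)
      then show "k1 = k2" using fz k by simp
    qed
    show "g ` ?K = ?A // ?R"
    proof
      show "g ` ?K \<subseteq> ?A // ?R" unfolding g_def using inA by (auto intro: quotientI)
      show "?A // ?R \<subseteq> g ` ?K"
      proof
        fix X assume "X \<in> ?A // ?R"
        then obtain C d where Cd: "(C, d) \<in> ?A" and X: "X = ?R `` {(C, d)}"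
          by (auto elim: quotientE)
        define k where "k = first_nz C"
        note N = necessary[OF Mnz Cd]
        have kK: "k \<in> ?K" using N unfolding k_def Tsum_def by auto
        have Cv: "C \<in> vecs n" and Cnz: "C \<noteq> (\<lambda>_. 0)" using Cd by (auto simp: admissible_pairs_def)
        have Cl: "\<And>l. l < k \<Longrightarrow> C l = 0" using first_nz(2)[OF Cnz] k_def by auto
        have CC: "C = (\<lambda>a. C k * C0 n M k a)"
        proof
          fix l
          consider "l < k" | "l = k" | "k < l \<and> l \<le> n" | "n < l" by linarith
          then show "C l = C k * C0 n M k l"
          proof cases
            case 1 then show ?thesis using Cl by (simp add: C0_def)
          next
            case 2 then show ?thesis by (simp add: C0_def)
          next
            case 3 then show ?thesis using N unfolding k_def[symmetric]
              by (simp add: C0_def beta0_def Tsum_def)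
          next
            case 4 then show ?thesis using Cv N by (auto simp: C0_def vecs_def k_def)
          qed
        qed
        have Ckz: "C k \<noteq> 0" using first_nz(1)[OF Cnz] k_def by simp
        have "((\<lambda>a. C k * C0 n M k a), D0 n M k) \<in> ?A" by (rule scale[OF inA[OF kK] Ckz])
        then have "(C, D0 n M k) \<in> ?A" using CC by simp
        then have dD: "d = D0 n M k" using uniq[OF Cd] by simp
        have "((C0 n M k, D0 n M k), (C, d)) \<in> ?R"
          unfolding scaling_rel_def using inA[OF kK] Cd dD CC Ckz by auto
        then have "g k = X" unfolding g_def X using eq_equiv_class_iff[OF eqv inA[OF kK] Cd] by simp
        then show "X \<in> g ` ?K" using kK by blast
      qed
    qed
  qed
  then show ?thesis by (rule bij_betw_same_card[symmetric])
qed

theorem corollary5p6: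
  fixes M :: "nat \<Rightarrow> nat" and n :: nat
  assumes p_odd: "CARD('p::prime_card) \<noteq> 2"
    and n_ge: "n \<ge> 2"
    and M_range: "\<forall>i\<in>{1..n}. 1 \<le> M i \<and> M i \<le> CARD('p) - 1"
  shows "(\<forall>C d d'. (C, d) \<in> (admissible_pairs n M :: (_ \<times> (nat \<Rightarrow> 'p mod_ring)) set)
                 \<and> (C, d') \<in> admissible_pairs n M \<longrightarrow> d = d')
       \<and> (\<forall>C d (c :: 'p mod_ring). (C, d) \<in> admissible_pairs n M \<and> c \<noteq> 0
                 \<longrightarrow> ((\<lambda>a. c * C a), d) \<in> admissible_pairs n M)
       \<and> int (card ((admissible_pairs n M :: (_ \<times> (nat \<Rightarrow> 'p mod_ring)) set) // scaling_rel n M))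
           = int n - 1 - int (card {i. 1 \<le> i \<and> i \<le> n - 2
                 \<and> (\<Sum>j=i+1..n. (of_nat (M j) :: 'p mod_ring)) = 0})"
proof -
  let ?m = "\<lambda>i. (of_nat (M i) :: 'p mod_ring)"
  have Mnz: "\<forall>i\<in>{1..n}. ?m i \<noteq> 0"
  proof
    fix i assume i: "i \<in> {1..n}"
    show "?m i \<noteq> 0"
    proof
      assume "?m i = 0"
      then have "CARD('p) dvd M i" by (rule of_nat_0_mod_ring_dvd)
      moreover have "M i \<ge> 1" "M i \<le> CARD('p) - 1" using M_range i by auto
      ultimately show False using dvd_imp_le[of "CARD('p)" "M i"] by simp
    qed
  qed
  let ?K = "{k. 1 \<le> k \<and> k \<le> n - 1 \<and> (Tsum n M k :: 'p mod_ring) \<noteq> 0}"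
  let ?Z = "{i. 1 \<le> i \<and> i \<le> n - 2 \<and> (\<Sum>j=i+1..n. (of_nat (M j) :: 'p mod_ring)) = 0}"
  have Tn: "(Tsum n M (n-1) :: 'p mod_ring) \<noteq> 0"
  proof -
    have "{n-1+1..n} = {n}" using n_ge by auto
    then show ?thesis using Mnz n_ge by (simp add: Tsum_def)
  qed
  have U: "?K \<union> ?Z = {1..n-1}"
  proof
    show "?K \<union> ?Z \<subseteq> {1..n-1}" by auto
    show "{1..n-1} \<subseteq> ?K \<union> ?Z"
    proof
      fix i assume i: "i \<in> {1..n-1}"
      show "i \<in> ?K \<union> ?Z"
      proof (cases "(Tsum n M i :: 'p mod_ring) = 0")
        case True
        then have "i \<noteq> n - 1" using Tn by auto
        then show ?thesis using i True by (auto simp: Tsum_def)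
      next
        case False then show ?thesis using i by auto
      qed
    qed
  qed
  have D: "?K \<inter> ?Z = {}" by (auto simp: Tsum_def)
  have "card ?K + card ?Z = n - 1"
    using card_Un_disjoint[of ?K ?Z] U D by simp
  moreover have "card ((admissible_pairs n M :: (_ \<times> (nat \<Rightarrow> 'p mod_ring)) set) // scaling_rel n M) = card ?K"
    by (rule count[OF Mnz])
  ultimately have "int (card ((admissible_pairs n M :: (_ \<times> (nat \<Rightarrow> 'p mod_ring)) set) // scaling_rel n M))
           = int n - 1 - int (card ?Z)" using n_ge by simp
  then show ?thesis using uniq scale by blast
qed

end
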